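(* Let $d\ge1$. There exists a constant $C_d>0$ such that for each $x\in\mathbb{R}^d$ there exists a family $(g_{1,x},g_{2,x},\dots,g_{d,x})\in(\mathcal{O}(\mathbb{Z}^d))^d$ with $g_{1,x}=\mathrm{Id}_{\mathbb{R}^d}$ such that the linear map $L_x:\mathbb{R}^d\to\mathbb{R}^d$ defined by $L_x(e_i)=g_{i,x}(x)$ for $i=1,\dots,d$ satisfies \[ \forall y\in\mathbb{R}^d\qquad C_d\|y\|_1\|x\|_1\le\|L_x(y)\|_1\le\|y\|_1\|x\|_1 . \] Moreover, if for each $n\in\mathcal{S}_2$ one sets $(n_1,n_2,\dots,n_d)=(n,g_{2,n}(n),\dots,g_{d,n}(n))$, then \[ \forall y\in\mathbb{R}^d\qquad \frac{C_d}{d^{3/2}}\|y\|_2\le\Big(\sum_{m=1}^d\langle y,n_m\rangle^2\Big)^{1/2}\le\sqrt d\,\|y\|_2 . \]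
   Context: $(e_1,\dots,e_d)$ is the canonical basis of $\mathbb{R}^d$, $\|x\|_1=\sum_i|x_i|$, $\|x\|_2$ is the Euclidean norm, and $\mathcal{S}_2=\{x\in\mathbb{R}^d:\|x\|_2=1\}$. For a permutation $\sigma$ of $\{1,\dots,d\}$ and $\epsilon\in\{-1,+1\}^d$, let $\Psi_{\sigma,\epsilon}(x)=\sum_{i=1}^d\epsilon(i)x_{\sigma(i)}e_i$; $\mathcal{O}(\mathbb{Z}^d)=\{\Psi_{\sigma,\epsilon}\}$ is the group of orthogonal transformations preserving the lattice $\mathbb{Z}^d$. *)

theory Defs
  imports "HOL-Analysis.Analysis"
begin

text \<open>The l1 norm on R^d (index type 'n, d = CARD('n)).\<close>
definition l1norm :: "real ^ 'n::finite \<Rightarrow> real" where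
  "l1norm x = (\<Sum>i\<in>UNIV. \<bar>x $ i\<bar>)"

definition Psi :: "('n::finite \<Rightarrow> 'n) \<Rightarrow> ('n \<Rightarrow> real) \<Rightarrow> real ^ 'n \<Rightarrow> real ^ 'n" where
  "Psi \<sigma> \<epsilon> x = (\<chi> i. \<epsilon> i * x $ (\<sigma> i))"

text \<open>O(Z^d): the group of lattice-preserving orthogonal maps Psi_{sigma,epsilon}.\<close>
definition OZ :: "(real ^ 'n::finite \<Rightarrow> real ^ 'n) set" where
  "OZ = {Psi \<sigma> \<epsilon> | \<sigma> \<epsilon>. \<sigma> permutes (UNIV :: 'n set) \<and> (\<forall>i. \<epsilon> i \<in> {-1, 1})}"

definition Lmap :: "('n::finite \<Rightarrow> (real ^ 'n \<Rightarrow> real ^ 'n)) \<Rightarrow> real ^ 'n \<Rightarrow> real ^ 'n \<Rightarrow> real ^ 'n" where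
  "Lmap g x y = (\<Sum>i\<in>UNIV. (y $ i) *\<^sub>R g i x)"

end

theory Submission imports Defs begin

lemma l1_ge_norm: "norm x \<le> l1norm x"
  unfolding l1norm_def by (rule norm_le_l1_cart)

lemma l1_le_norm: "l1norm (x::real^'n) \<le> real CARD('n) * norm x"
proof -
  have "l1norm x \<le> (\<Sum>i\<in>(UNIV::'n set). norm x)"
    unfolding l1norm_def by (rule sum_mono) (rule component_le_norm_cart)
  then show ?thesis by simp
qed

lemma l1_nonneg: "0 \<le> l1norm x"
  unfolding l1norm_def by (simp add: sum_nonneg)

lemma l1_add: "l1norm (x + y) \<le> l1norm x + l1norm y"
  unfolding l1norm_def by (simp add: sum.distrib[symmetric] sum_mono abs_triangle_ineq)

lemma l1_scale: "l1norm (c *\<^sub>R x) = \<bar>c\<bar> * l1norm x"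
  unfolding l1norm_def by (simp add: abs_mult sum_distrib_left)

lemma l1_diff: "l1norm (x - y) = l1norm (y - x)"
  unfolding l1norm_def by (simp add: abs_minus_commute)

lemma l1_sum: "l1norm (\<Sum>i\<in>A. f i) \<le> (\<Sum>i\<in>A. l1norm (f i))"
proof -
  have "l1norm (\<Sum>i\<in>A. f i) = (\<Sum>j\<in>UNIV. \<bar>\<Sum>i\<in>A. f i $ j\<bar>)"
    unfolding l1norm_def by (simp add: sum_component)
  also have "\<dots> \<le> (\<Sum>j\<in>UNIV. \<Sum>i\<in>A. \<bar>f i $ j\<bar>)"
    by (rule sum_mono) (rule sum_abs)
  also have "\<dots> = (\<Sum>i\<in>A. l1norm (f i))"
    unfolding l1norm_def by (rule sum.swap)
  finally show ?thesis .
qed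

lemma l1_cont: "continuous_on UNIV l1norm"
  unfolding l1norm_def by (intro continuous_intros)

lemma OZ_E:
  assumes "g \<in> OZ"
  obtains \<sigma> \<epsilon> where "g = Psi \<sigma> \<epsilon>" "\<sigma> permutes UNIV" "\<forall>i. \<epsilon> i \<in> {-1,1}"
  using assms unfolding OZ_def by blast

lemma Psi_add: "Psi s e (x + y) = Psi s e x + Psi s e y"
  unfolding Psi_def by (simp add: vec_eq_iff algebra_simps)
lemma Psi_scale: "Psi s e (c *\<^sub>R x) = c *\<^sub>R Psi s e x"
  unfolding Psi_def by (simp add: vec_eq_iff algebra_simps)
lemma Psi_diff: "Psi s e (x - y) = Psi s e x - Psi s e y"
  unfolding Psi_def by (simp add: vec_eq_iff algebra_simps)

lemma OZ_add: "g \<in> OZ \<Longrightarrow> g (x + y) = g x + g y"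
  by (metis OZ_E Psi_add)
lemma OZ_scale: "g \<in> OZ \<Longrightarrow> g (c *\<^sub>R x) = c *\<^sub>R g x"
  by (metis OZ_E Psi_scale)
lemma OZ_diff: "g \<in> OZ \<Longrightarrow> g (x - y) = g x - g y"
  by (metis OZ_E Psi_diff)

lemma OZ_l1: assumes "g \<in> OZ" shows "l1norm (g x) = l1norm x"
proof -
  obtain s e where g: "g = Psi s e" "s permutes UNIV" "\<forall>i. e i \<in> {-1,1}"
    using OZ_E[OF assms] by blast
  have ae: "\<bar>e i\<bar> = 1" for i using g(3) by (metis abs_1 abs_minus insertE singletonD)
  have "\<bar>g x $ i\<bar> = \<bar>x $ s i\<bar>" for i
    unfolding g(1) Psi_def using ae[of i] by (simp add: abs_mult)
  then have "l1norm (g x) = (\<Sum>i\<in>UNIV. \<bar>x $ s i\<bar>)"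
    unfolding l1norm_def by simp
  also have "\<dots> = l1norm x"
    unfolding l1norm_def using sum.permute[OF g(2), of "\<lambda>i. \<bar>x $ i\<bar>"] by (simp add: comp_def)
  finally show ?thesis .
qed

lemma OZ_norm: assumes "g \<in> OZ" shows "norm (g x) = norm x"
proof -
  obtain s e where g: "g = Psi s e" "s permutes UNIV" "\<forall>i. e i \<in> {-1,1}"
    using OZ_E[OF assms] by blast
  have ae: "\<bar>e i\<bar> = 1" for i using g(3) by (metis abs_1 abs_minus insertE singletonD)
  have "(norm (g x $ i))\<^sup>2 = (norm (x $ s i))\<^sup>2" for i
    unfolding g(1) Psi_def using ae[of i] by (simp add: abs_mult)
  then have "(\<Sum>i\<in>UNIV. (norm (g x $ i))\<^sup>2) = (\<Sum>i\<in>UNIV. (norm (x $ s i))\<^sup>2)"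
    by simp
  also have "\<dots> = (\<Sum>i\<in>UNIV. (norm (x $ i))\<^sup>2)"
    using sum.permute[OF g(2), of "\<lambda>i. (norm (x $ i))\<^sup>2"] by (simp add: comp_def)
  finally show ?thesis unfolding norm_vec_def L2_set_def by simp
qed

lemma id_OZ: "id \<in> OZ"
proof -
  have "id = Psi id (\<lambda>_. 1)" unfolding Psi_def by (simp add: vec_eq_iff fun_eq_iff)
  then show ?thesis unfolding OZ_def using permutes_id by fastforce
qed

lemma Lmap_upper:
  assumes "\<forall>i. F i \<in> OZ"
  shows "l1norm (Lmap F x y) \<le> l1norm y * l1norm x"
proof -
  have "l1norm (Lmap F x y) \<le> (\<Sum>i\<in>UNIV. l1norm (y $ i *\<^sub>R F i x))"
    unfolding Lmap_def by (rule l1_sum)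
  also have "\<dots> = (\<Sum>i\<in>UNIV. \<bar>y $ i\<bar> * l1norm x)"
    using assms by (simp add: l1_scale OZ_l1)
  also have "\<dots> = l1norm y * l1norm x"
    unfolding l1norm_def by (simp add: sum_distrib_right)
  finally show ?thesis .
qed

lemma Lmap_diff:
  assumes "\<forall>i. F i \<in> OZ"
  shows "Lmap F x y - Lmap F x' y = Lmap F (x - x') y"
  unfolding Lmap_def using assms
  by (simp add: OZ_diff sum_subtractf[symmetric] scaleR_diff_right)

lemma Lmap_scale:
  assumes "\<forall>i. F i \<in> OZ"
  shows "Lmap F (c *\<^sub>R x) y = c *\<^sub>R Lmap F x y"
  unfolding Lmap_def using assms
  by (simp add: OZ_scale scaleR_sum_right mult.commute)

lemma Lmap_linear: "linear (Lmap F x)"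
  unfolding Lmap_def
  by (intro linearI) (simp_all add: sum.distrib scaleR_add_left scaleR_sum_right)


lemma span_orbit:
  fixes x :: "real^'n"
  assumes "x \<noteq> 0"
  shows "span ((\<lambda>g. g x) ` OZ) = UNIV"
proof -
  let ?V = "(\<lambda>g. g x) ` OZ"
  obtain k where k: "x $ k \<noteq> 0" using assms by (auto simp: vec_eq_iff)
  have ax: "axis j 1 \<in> span ?V" for j
  proof -
    define t where "t = Transposition.transpose j k"
    have tp: "t permutes UNIV" unfolding t_def by (rule permutes_swap_id) auto
    define g1 where "g1 = Psi t (\<lambda>_. 1)"
    define g2 where "g2 = Psi t (\<lambda>i. if i = j then -1 else 1)"
    have "g1 \<in> OZ" unfolding OZ_def g1_def using tp by auto
    moreover have "g2 \<in> OZ"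
    proof -
      have "(\<forall>i. (if i = j then -1 else 1::real) \<in> {-1,1})" by auto
      then show ?thesis unfolding OZ_def g2_def using tp by blast
    qed
    ultimately have "g1 x \<in> ?V" "g2 x \<in> ?V" by auto
    then have "g1 x - g2 x \<in> span ?V" by (simp add: span_base span_diff)
    moreover have "g1 x - g2 x = (2 * x $ k) *\<^sub>R axis j 1"
      unfolding g1_def g2_def Psi_def t_def by (auto simp: vec_eq_iff axis_def)
    ultimately have "(2 * x $ k) *\<^sub>R axis j 1 \<in> span ?V" by simp
    then have "(1 / (2 * x $ k)) *\<^sub>R ((2 * x $ k) *\<^sub>R axis j 1) \<in> span ?V"
      by (rule span_scale)
    then show ?thesis using k by simp
  qed
  have "v \<in> span ?V" for v :: "real^'n"
  proof -
    have "(\<Sum>i\<in>UNIV. v $ i *\<^sub>R axis i 1) \<in> span ?V"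
      by (intro span_sum span_scale ax)
    moreover have "(\<Sum>i\<in>UNIV. v $ i *\<^sub>R axis i 1) = v"
      using basis_expansion[of v] by (simp add: scalar_mult_eq_scaleR)
    ultimately show ?thesis by simp
  qed
  then show ?thesis by auto
qed

lemma good_family:
  fixes x :: "real^'n" and i0 :: 'n
  assumes "x \<noteq> 0"
  shows "\<exists>F. F i0 = id \<and> (\<forall>i. F i \<in> OZ) \<and> (\<forall>y. Lmap F x y = 0 \<longrightarrow> y = 0)"
proof -
  let ?V = "(\<lambda>g. g x) ` OZ"
  have xV: "{x} \<subseteq> ?V" using id_OZ by (simp add: image_iff) (rule bexI[of _ id], auto)
  have ix: "independent {x}" using assms by simp
  obtain B where B: "{x} \<subseteq> B" "B \<subseteq> ?V" "independent B" "?V \<subseteq> span B"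
    using maximal_independent_subset_extend[OF xV ix] by blast
  have fB: "finite B" using B(3) finiteI_independent by blast
  have "UNIV \<subseteq> span B" using span_orbit[OF assms] B(4)
    by (metis span_minimal subspace_span)
  then have "card B = dim (UNIV :: (real^'n) set)"
    using basis_card_eq_dim[of B UNIV] B(3) by auto
  then have cB: "card B = CARD('n)" by simp
  obtain f where f: "bij_betw f (UNIV::'n set) B"
    using finite_same_card_bij[of "UNIV::'n set" B] fB cB by auto
  obtain a where a: "f a = x" using f B(1) unfolding bij_betw_def by auto
  define h where "h = f \<circ> Transposition.transpose i0 a"
  have hb: "bij_betw h UNIV B" unfolding h_def
    by (rule bij_betw_trans[OF _ f]) (rule permutes_imp_bij, rule permutes_swap_id, auto)
  have h0: "h i0 = x" unfolding h_def using a by simp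
  have "\<forall>i. \<exists>g. g \<in> OZ \<and> g x = h i"
  proof
    fix i have "h i \<in> ?V" using bij_betw_apply[OF hb] B(2) by blast
    then show "\<exists>g. g \<in> OZ \<and> g x = h i" by (auto simp: image_iff)
  qed
  then obtain F0 where F0: "\<And>i. F0 i \<in> OZ \<and> F0 i x = h i" by (rule choice[THEN exE]) blast
  define F where "F i = (if i = i0 then id else F0 i)" for i
  have FO: "\<forall>i. F i \<in> OZ" unfolding F_def using F0 id_OZ by auto
  have Fh: "F i x = h i" for i unfolding F_def using F0 h0 by auto
  have inj: "\<forall>y. Lmap F x y = 0 \<longrightarrow> y = 0"
  proof (intro allI impI)
    fix y assume y0: "Lmap F x y = 0"
    show "y = 0"
    proof (rule ccontr)
      assume "y \<noteq> 0"
      then obtain j where j: "y $ j \<noteq> 0" by (auto simp: vec_eq_iff)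
      define u where "u v = y $ (inv h v)" for v
      have ih: "inj h" using hb bij_betw_def by blast
      have "(\<Sum>v\<in>B. u v *\<^sub>R v) = (\<Sum>i\<in>UNIV. u (h i) *\<^sub>R h i)"
        using sum.reindex_bij_betw[OF hb, of "\<lambda>v. u v *\<^sub>R v"] by simp
      also have "\<dots> = Lmap F x y" unfolding Lmap_def u_def Fh using ih by simp
      finally have "(\<Sum>v\<in>B. u v *\<^sub>R v) = 0" using y0 by simp
      moreover have "h j \<in> B" using hb unfolding bij_betw_def by auto
      moreover have "u (h j) \<noteq> 0" using j ih unfolding u_def by (simp add: inv_f_f)
      ultimately have "dependent B" unfolding dependent_explicit using fB by (intro exI[of _ B] exI[of _ u]) auto
      then show False using B(3) by simp
    qed
  qed
  have "F i0 = id" by (simp add: F_def)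
  then show ?thesis using FO inj by blast
qed


lemma l1_pos: "x \<noteq> 0 \<Longrightarrow> 0 < l1norm x"
  using l1_ge_norm[of x] by (metis zero_less_norm_iff order_less_le_trans)

lemma l1_0 [simp]: "l1norm (0::real^'n) = 0"
  unfolding l1norm_def by simp

lemma local_bound:
  fixes x :: "real^'n" and i0 :: 'n
  assumes "x \<noteq> 0"
  shows "\<exists>F c. c > 0 \<and> F i0 = id \<and> (\<forall>i. F i \<in> OZ) \<and> (\<forall>y. c * l1norm y \<le> l1norm (Lmap F x y))"
proof -
  obtain F where F: "F i0 = id" "\<forall>i. F i \<in> OZ" "\<forall>y. Lmap F x y = 0 \<longrightarrow> y = 0"
    using good_family[OF assms] by blast
  have bl: "bounded_linear (Lmap F x)" using Lmap_linear linear_conv_bounded_linear by blast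
  obtain e where e: "e > 0" "\<forall>y\<in>UNIV. e * norm y \<le> norm (Lmap F x y)"
    using injective_imp_isometric[OF closed_UNIV subspace_UNIV bl] F(3) by blast
  define c where "c = e / real CARD('n)"
  have c: "c > 0" unfolding c_def using e by simp
  have "c * l1norm y \<le> l1norm (Lmap F x y)" for y
  proof -
    have "c * l1norm y \<le> c * (real CARD('n) * norm y)"
      using c l1_le_norm[of y] by (simp add: mult_left_mono)
    also have "\<dots> = e * norm y" unfolding c_def by simp
    also have "\<dots> \<le> norm (Lmap F x y)" using e by simp
    also have "\<dots> \<le> l1norm (Lmap F x y)" by (rule l1_ge_norm)
    finally show ?thesis .
  qed
  then show ?thesis using c F by blast
qed

lemma uniform_bound:
  fixes i0 :: "'n::finite"
  shows "\<exists>C>0. \<forall>u::real^'n. l1norm u = 1 \<longrightarrow>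
     (\<exists>F. F i0 = id \<and> (\<forall>i. F i \<in> OZ) \<and> (\<forall>y. C * l1norm y \<le> l1norm (Lmap F u y)))"
proof -
  define S where "S = {u::real^'n. l1norm u = 1}"
  have "\<forall>u\<in>S. \<exists>p. snd p > 0 \<and> fst p i0 = id \<and> (\<forall>i. fst p i \<in> OZ) \<and>
          (\<forall>y. snd p * l1norm y \<le> l1norm (Lmap (fst p) u y))"
  proof
    fix u assume "u \<in> S"
    then have "u \<noteq> 0" unfolding S_def by auto
    then obtain F c where "c > 0 \<and> F i0 = id \<and> (\<forall>i. F i \<in> OZ) \<and> (\<forall>y. c * l1norm y \<le> l1norm (Lmap F u y))"
      using local_bound by blast
    then show "\<exists>p. snd p > 0 \<and> fst p i0 = id \<and> (\<forall>i. fst p i \<in> OZ) \<and>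
          (\<forall>y. snd p * l1norm y \<le> l1norm (Lmap (fst p) u y))"
      by (intro exI[of _ "(F, c)"]) simp
  qed
  then obtain P where P: "\<forall>u\<in>S. snd (P u) > 0 \<and> fst (P u) i0 = id \<and> (\<forall>i. fst (P u) i \<in> OZ) \<and>
          (\<forall>y. snd (P u) * l1norm y \<le> l1norm (Lmap (fst (P u)) u y))"
    by (rule bchoice[THEN exE]) blast
  define cc where "cc u = snd (P u)" for u
  define FF where "FF u = fst (P u)" for u
  define U where "U u = {v. l1norm (v - u) < cc u / 2}" for u
  have contS: "continuous_on UNIV (\<lambda>v::real^'n. l1norm (v - u))" for u
    unfolding l1norm_def by (intro continuous_intros)
  have "compact S"
  proof (subst compact_eq_bounded_closed, intro conjI)
    show "bounded S" unfolding bounded_iff S_def by (metis l1_ge_norm mem_Collect_eq)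
    show "closed S" unfolding S_def by (intro closed_Collect_eq l1_cont continuous_intros)
  qed
  moreover have "open (U u)" for u
    unfolding U_def by (intro open_Collect_less contS continuous_intros)
  moreover have "S \<subseteq> (\<Union>u\<in>S. U u)"
  proof
    fix u assume u: "u \<in> S"
    have "u \<in> U u" unfolding U_def cc_def using P u by auto
    then show "u \<in> (\<Union>u\<in>S. U u)" using u by blast
  qed
  ultimately obtain C' where C': "C' \<subseteq> S" "finite C'" "S \<subseteq> (\<Union>u\<in>C'. U u)"
    by (rule compactE_image)
  have "\<bar>axis i0 1 $ i\<bar> = (if i = i0 then 1 else (0::real))" for i
    by (simp add: axis_def)
  then have aS: "axis i0 1 \<in> S" unfolding S_def l1norm_def by simp
  then have ne: "C' \<noteq> {}" using C'(3) by blast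
  define C where "C = Min ((\<lambda>u. cc u / 2) ` C')"
  have Cpos: "C > 0" unfolding C_def using C' ne P cc_def by (subst Min_gr_iff) auto
  have "\<forall>u. l1norm u = 1 \<longrightarrow>
     (\<exists>F. F i0 = id \<and> (\<forall>i. F i \<in> OZ) \<and> (\<forall>y. C * l1norm y \<le> l1norm (Lmap F u y)))"
  proof (intro allI impI)
    fix u :: "real^'n" assume "l1norm u = 1"
    then have "u \<in> S" unfolding S_def by simp
    then obtain w where w: "w \<in> C'" "l1norm (u - w) < cc w / 2" using C'(3) unfolding U_def by blast
    have wS: "w \<in> S" using w C' by blast
    let ?F = "FF w"
    have Fp: "?F i0 = id" "\<forall>i. ?F i \<in> OZ" "\<forall>y. cc w * l1norm y \<le> l1norm (Lmap ?F w y)" "cc w > 0"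
      using P wS unfolding FF_def cc_def by auto
    have Cle: "C \<le> cc w / 2" unfolding C_def using C' w by (intro Min_le) auto
    have "C * l1norm y \<le> l1norm (Lmap ?F u y)" for y
    proof -
      have eq: "Lmap ?F w y = Lmap ?F u y + Lmap ?F (w - u) y"
        using Lmap_diff[OF Fp(2), of w y u] by (simp add: algebra_simps)
      have A0: "cc w * l1norm y \<le> l1norm (Lmap ?F u y + Lmap ?F (w - u) y)"
        using Fp(3) eq by metis
      have A: "cc w * l1norm y \<le> l1norm (Lmap ?F u y) + l1norm y * l1norm (w - u)"
        using A0 l1_add[of "Lmap ?F u y" "Lmap ?F (w - u) y"] Lmap_upper[OF Fp(2), of "w - u" y]
        by linarith
      have B: "l1norm y * l1norm (w - u) \<le> l1norm y * (cc w / 2)"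
        using w(2) l1_diff[of w u] l1_nonneg[of y] by (intro mult_left_mono) auto
      have D: "C * l1norm y \<le> (cc w / 2) * l1norm y"
        using Cle l1_nonneg[of y] by (intro mult_right_mono) auto
      show ?thesis using A B D by (simp add: algebra_simps)
    qed
    then show "\<exists>F. F i0 = id \<and> (\<forall>i. F i \<in> OZ) \<and> (\<forall>y. C * l1norm y \<le> l1norm (Lmap F u y))"
      using Fp by blast
  qed
  then show ?thesis using Cpos by blast
qed


theorem lemma2p2:
  fixes i0 :: "'n::finite"
  shows "\<exists>C>0. \<exists>G :: real ^ 'n \<Rightarrow> 'n \<Rightarrow> (real ^ 'n \<Rightarrow> real ^ 'n).
    (\<forall>x. (\<forall>i. G x i \<in> OZ) \<and> G x i0 = id \<and>
         (\<forall>y. C * l1norm y * l1norm x \<le> l1norm (Lmap (G x) x y) \<and>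
              l1norm (Lmap (G x) x y) \<le> l1norm y * l1norm x)) \<and>
    (\<forall>n. norm n = 1 \<longrightarrow>
         (\<forall>y. C / (real CARD('n) powr (3/2)) * norm y \<le> sqrt (\<Sum>m\<in>UNIV. (inner y (G n m n))\<^sup>2) \<and>
              sqrt (\<Sum>m\<in>UNIV. (inner y (G n m n))\<^sup>2) \<le> sqrt (real CARD('n)) * norm y))"
proof -
  obtain C where C: "C > 0" and CU: "\<forall>u::real^'n. l1norm u = 1 \<longrightarrow>
     (\<exists>F. F i0 = id \<and> (\<forall>i. F i \<in> OZ) \<and> (\<forall>y. C * l1norm y \<le> l1norm (Lmap F u y)))"
    using uniform_bound[of i0] by blast
  obtain FF where FF: "\<forall>u::real^'n. l1norm u = 1 \<longrightarrow>
     FF u i0 = id \<and> (\<forall>i. FF u i \<in> OZ) \<and> (\<forall>y. C * l1norm y \<le> l1norm (Lmap (FF u) u y))"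
    using CU by metis
  define G where "G x = (if x = 0 then (\<lambda>_. id) else FF ((1 / l1norm x) *\<^sub>R x))" for x :: "real^'n"
  have GO: "\<forall>i. G x i \<in> OZ" for x
    unfolding G_def using FF id_OZ l1_scale l1_pos
    by (cases "x = 0") (auto simp: l1_scale dest: l1_pos)
  have G1: "\<forall>x. (\<forall>i. G x i \<in> OZ) \<and> G x i0 = id \<and>
         (\<forall>y. C * l1norm y * l1norm x \<le> l1norm (Lmap (G x) x y) \<and>
              l1norm (Lmap (G x) x y) \<le> l1norm y * l1norm x)"
  proof (intro allI conjI)
    fix x i show "G x i \<in> OZ" using GO by blast
  next
    fix x :: "real^'n"
    show "G x i0 = id"
    proof (cases "x = 0")
      case True then show ?thesis unfolding G_def by simp
    next
      case False
      then have "l1norm ((1 / l1norm x) *\<^sub>R x) = 1" using l1_pos[OF False] by (simp add: l1_scale)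
      then show ?thesis unfolding G_def using FF False by simp
    qed
  next
    fix x y :: "real^'n"
    show "C * l1norm y * l1norm x \<le> l1norm (Lmap (G x) x y)"
    proof (cases "x = 0")
      case True then show ?thesis by (simp add: l1_nonneg)
    next
      case False
      define u where "u = (1 / l1norm x) *\<^sub>R x"
      have lp: "l1norm x > 0" using l1_pos[OF False] .
      have u1: "l1norm u = 1" unfolding u_def using lp by (simp add: l1_scale)
      have Gx: "G x = FF u" unfolding G_def u_def using False by simp
      have xu: "x = l1norm x *\<^sub>R u" unfolding u_def using lp by simp
      have "Lmap (FF u) x y = l1norm x *\<^sub>R Lmap (FF u) u y"
        using Lmap_scale[of "FF u" "l1norm x" u y] FF u1 xu by metis
      then have "l1norm (Lmap (G x) x y) = l1norm x * l1norm (Lmap (FF u) u y)"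
        using Gx lp by (simp add: l1_scale)
      moreover have "C * l1norm y \<le> l1norm (Lmap (FF u) u y)" using FF u1 by blast
      ultimately show ?thesis using lp by (simp add: mult_left_mono mult.commute)
    qed
  next
    fix x y :: "real^'n"
    show "l1norm (Lmap (G x) x y) \<le> l1norm y * l1norm x" by (rule Lmap_upper[OF GO])
  qed
  have G2: "\<forall>n. norm n = 1 \<longrightarrow>
         (\<forall>y. C / (real CARD('n) powr (3/2)) * norm y \<le> sqrt (\<Sum>m\<in>UNIV. (inner y (G n m n))\<^sup>2) \<and>
              sqrt (\<Sum>m\<in>UNIV. (inner y (G n m n))\<^sup>2) \<le> sqrt (real CARD('n)) * norm y)"
  proof (intro allI impI)
    fix n y :: "real^'n" assume n1: "norm n = 1"
    define w where "w = (\<chi> m. inner y (G n m n))"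
    have sw: "sqrt (\<Sum>m\<in>UNIV. (inner y (G n m n))\<^sup>2) = norm w"
      unfolding w_def norm_vec_def L2_set_def by simp
    define d where "d = real CARD('n)"
    have d1: "d \<ge> 1" unfolding d_def by simp
    have up: "sqrt (\<Sum>m\<in>UNIV. (inner y (G n m n))\<^sup>2) \<le> sqrt (real CARD('n)) * norm y"
    proof -
      have "(inner y (G n m n))\<^sup>2 \<le> (norm y)\<^sup>2" for m
      proof -
        have "\<bar>inner y (G n m n)\<bar> \<le> norm y * norm (G n m n)" by (rule Cauchy_Schwarz_ineq2)
        also have "\<dots> = norm y"
        proof -
          have "G n m \<in> OZ" using GO by blast
          then show ?thesis using OZ_norm[of "G n m" n] n1 by simp
        qed
        finally show ?thesis by (metis abs_le_square_iff abs_norm_cancel)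
      qed
      then have "(\<Sum>m\<in>UNIV. (inner y (G n m n))\<^sup>2) \<le> (\<Sum>m\<in>(UNIV::'n set). (norm y)\<^sup>2)"
        by (rule sum_mono)
      also have "\<dots> = real CARD('n) * (norm y)\<^sup>2" by simp
      finally have "sqrt (\<Sum>m\<in>UNIV. (inner y (G n m n))\<^sup>2) \<le> sqrt (real CARD('n) * (norm y)\<^sup>2)"
        by (rule real_sqrt_le_mono)
      also have "\<dots> = sqrt (real CARD('n)) * norm y" by (simp add: real_sqrt_mult)
      finally show ?thesis .
    qed
    let ?L = "Lmap (G n) n"
    have n1': "l1norm n \<ge> 1" using l1_ge_norm[of n] n1 by simp
    have Lb: "C * l1norm z \<le> l1norm (?L z)" for z
    proof -
      have "C * l1norm z \<le> C * l1norm z * l1norm n"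
        using n1' C l1_nonneg[of z] by (metis mult.right_neutral mult_left_mono mult_nonneg_nonneg less_imp_le)
      also have "\<dots> \<le> l1norm (?L z)" using G1 by blast
      finally show ?thesis .
    qed
    have "inj ?L"
    proof (rule linear_injective_0[THEN iffD2, OF Lmap_linear], intro allI impI)
      fix z assume "?L z = 0"
      then have "C * l1norm z \<le> 0" using Lb[of z] by simp
      then have "l1norm z \<le> 0" using C by (simp add: mult_le_0_iff)
      then show "z = 0" using l1_pos by force
    qed
    then have "surj ?L" using linear_injective_imp_surjective[OF Lmap_linear] by simp
    then obtain z where z: "?L z = y" by (metis surjD)
    have "(norm y)\<^sup>2 = inner y y" by (simp add: power2_norm_eq_inner)
    also have "\<dots> = inner y (\<Sum>i\<in>UNIV. z $ i *\<^sub>R G n i n)" using z unfolding Lmap_def by simp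
    also have "\<dots> = (\<Sum>i\<in>UNIV. z $ i * inner y (G n i n))" by (simp add: inner_sum_right)
    also have "\<dots> = inner z w" unfolding w_def inner_vec_def by simp
    also have "\<dots> \<le> norm z * norm w" by (rule norm_cauchy_schwarz)
    finally have yy: "(norm y)\<^sup>2 \<le> norm z * norm w" .
    have "C * norm z \<le> C * l1norm z" using C l1_ge_norm[of z] by simp
    also have "\<dots> \<le> l1norm y" using Lb[of z] z by simp
    also have "\<dots> \<le> d * norm y" unfolding d_def by (rule l1_le_norm)
    finally have zb: "C * norm z \<le> d * norm y" .
    have key: "C / d * norm y \<le> norm w"
    proof (cases "y = 0")
      case True then show ?thesis by simp
    next
      case False
      then have ny: "norm y > 0" by simp
      have "C * (norm y)\<^sup>2 \<le> C * norm z * norm w" using yy C by (simp add: mult.assoc)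
      also have "\<dots> \<le> d * norm y * norm w" using zb by (simp add: mult_right_mono)
      finally have "C * (norm y)\<^sup>2 \<le> d * norm y * norm w" .
      then have "C * norm y * norm y \<le> (d * norm w) * norm y" by (simp add: power2_eq_square algebra_simps)
      then have "C * norm y \<le> d * norm w" using ny by simp
      then show ?thesis using d1 by (simp add: field_simps)
    qed
    have "d \<le> d powr (3/2)"
    proof -
      have "d powr 1 \<le> d powr (3/2)" using d1 by (intro powr_mono) auto
      then show ?thesis using d1 by simp
    qed
    then have "C / d powr (3/2) \<le> C / d" using C d1 by (intro divide_left_mono) auto
    then have "C / d powr (3/2) * norm y \<le> C / d * norm y" by (intro mult_right_mono) auto
    then have "C / (real CARD('n) powr (3/2)) * norm y \<le> sqrt (\<Sum>m\<in>UNIV. (inner y (G n m n))\<^sup>2)"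
      using key sw unfolding d_def by simp
    then show "C / (real CARD('n) powr (3/2)) * norm y \<le> sqrt (\<Sum>m\<in>UNIV. (inner y (G n m n))\<^sup>2) \<and>
              sqrt (\<Sum>m\<in>UNIV. (inner y (G n m n))\<^sup>2) \<le> sqrt (real CARD('n)) * norm y"
      using up by blast
  qed
  show ?thesis using C G1 G2 by blast
qed

end
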